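(* Let $(Q,\cdot)$ be a magma and $e\in Q$. Then $(Q,\cdot,e)$ is a double Ward quasigroup if and only if $(Q,\cdot)$ is cancellative and satisfies $(ee\cdot xz)(ey\cdot z)=xy$ for all $x,y,z\in Q$.
   Context: A quasigroup is a magma in which $ax=b$ and $ya=b$ have unique solutions for all $a,b$. A double Ward quasigroup $(Q,\cdot,e)$ is a quasigroup with an element $e$ such that $(ee\cdot xz)(ey\cdot z)=xy$ for all $x,y,z$. A magma is cancellative if $ax=ay$ implies $x=y$ and $xa=ya$ implies $x=y$. *)

theory Defs
  imports Main
begin

definition quasigroup :: "('a \<Rightarrow> 'a \<Rightarrow> 'a) \<Rightarrow> bool" where
  "quasigroup m \<longleftrightarrow> (\<forall>a b. (\<exists>!x. m a x = b) \<and> (\<exists>!y. m y a = b))"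

definition cancellative :: "('a \<Rightarrow> 'a \<Rightarrow> 'a) \<Rightarrow> bool" where
  "cancellative m \<longleftrightarrow> (\<forall>a x y. m a x = m a y \<longrightarrow> x = y) \<and> (\<forall>a x y. m x a = m y a \<longrightarrow> x = y)"

definition double_ward_quasigroup :: "('a \<Rightarrow> 'a \<Rightarrow> 'a) \<Rightarrow> 'a \<Rightarrow> bool" where
  "double_ward_quasigroup m e \<longleftrightarrow> quasigroup m \<and>
     (\<forall>x y z. m (m (m e e) (m x z)) (m (m e y) z) = m x y)"

end

theory Submission
  imports Defs
begin

lemma aux_inv:
  fixes m :: "'a \<Rightarrow> 'a \<Rightarrow> 'a"
  assumes A: "\<And>x y z. m (m (m e e) (m x z)) (m (m e y) z) = m x y"
  and L: "\<And>a x y. m a x = m a y \<Longrightarrow> x = y"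
  shows "m e (m e y) = y"
  by (metis A L)

lemma aux_left:
  fixes m :: "'a \<Rightarrow> 'a \<Rightarrow> 'a"
  assumes A: "\<And>x y z. m (m (m e e) (m x z)) (m (m e y) z) = m x y"
  and I: "\<And>y. m e (m e y) = y"
  shows "\<exists>x. m a x = b"
  by (metis A I)

lemma aux_right:
  fixes m :: "'a \<Rightarrow> 'a \<Rightarrow> 'a"
  assumes A: "\<And>x y z. m (m (m e e) (m x z)) (m (m e y) z) = m x y"
  and I: "\<And>y. m e (m e y) = y"
  shows "\<exists>x. m x a = b"
  by (metis A I)

theorem theorem4p11:
  fixes m :: "'a \<Rightarrow> 'a \<Rightarrow> 'a" and e :: 'a
  shows "double_ward_quasigroup m e \<longleftrightarrow>
    (cancellative m \<and> (\<forall>x y z. m (m (m e e) (m x z)) (m (m e y) z) = m x y))"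
proof
  assume "double_ward_quasigroup m e"
  then show "cancellative m \<and> (\<forall>x y z. m (m (m e e) (m x z)) (m (m e y) z) = m x y)"
    unfolding double_ward_quasigroup_def quasigroup_def cancellative_def by metis
next
  assume H: "cancellative m \<and> (\<forall>x y z. m (m (m e e) (m x z)) (m (m e y) z) = m x y)"
  then have A: "\<And>x y z. m (m (m e e) (m x z)) (m (m e y) z) = m x y" by blast
  have L: "\<And>a x y. m a x = m a y \<Longrightarrow> x = y" and R: "\<And>a x y. m x a = m y a \<Longrightarrow> x = y"
    using H unfolding cancellative_def by blast+
  have I: "\<And>y. m e (m e y) = y" by (rule aux_inv[of m e]) (fact A, rule L)
  have "quasigroup m"
    unfolding quasigroup_def
  proof (intro allI conjI)
    fix a b
    show "\<exists>!x. m a x = b" using aux_left[OF A I, of a b] L by blast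
    show "\<exists>!y. m y a = b" using aux_right[OF A I, of a b] R by blast
  qed
  then show "double_ward_quasigroup m e" unfolding double_ward_quasigroup_def using A by blast
qed

end
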